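(* Let $q\in\mathbb{C}^\times$ with $q\neq\pm1$, let $\mathbb{C}[x_1,\dots,x_n]$ be the polynomial algebra (the algebra of polynomial functions on an $n$-dimensional complex vector space with linear coordinates $x_1,\dots,x_n$), and fix $i\in\{1,\dots,n\}$. If $D$ is a twisted derivation of $\mathbb{C}[x_1,\dots,x_n]$ relative to $\gamma_{q,x_i}$, then there is a polynomial $f_i\in\mathbb{C}[x_1,\dots,x_n]$ such that $D=f_i\,\partial_{q,x_i}$ (i.e. $D(a)=f_i\cdot\partial_{q,x_i}(a)$ for all $a$).
   Context: For an associative $\mathbb{C}$-algebra $A$ and an algebra automorphism $\sigma$ of $A$, a twisted derivation of $A$ relative to $\sigma$ is a linear map $D\colon A\to A$ with $D(ab)=D(a)\sigma(b)+\sigma^{-1}(a)D(b)$ for all $a,b\in A$. Here $\gamma_{q,x_i}=q^{x_i\partial_{x_i}}$ is the algebra automorphism of $\mathbb{C}[x_1,\dots,x_n]$ with $x_i\mapsto qx_i$ and $x_j\mapsto x_j$ for $j\neq i$, and $\partial_{q,x_i}=\frac{1}{x_i}\,\frac{q^{x_i\partial_{x_i}}-q^{-x_i\partial_{x_i}}}{q-q^{-1}}$, i.e. the linear map sending a monomial $x_1^{a_1}\cdots x_n^{a_n}$ to $[a_i]_q\,x_1^{a_1}\cdots x_i^{a_i-1}\cdots x_n^{a_n}$, where $[v]_q=\frac{q^v-q^{-v}}{q-q^{-1}}$. It is a twisted derivation relative to $\gamma_{q,x_i}$. *)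

theory Defs
  imports Complex_Main "HOL-Library.Poly_Mapping"
begin

(* Polynomials in the variables indexed by the finite type 'v:
  a polynomial is a finitely supported map from monomials (exponent vectors
  'v =>0 nat) to complex coefficients. *)

type_synonym 'v cpoly = "('v \<Rightarrow>\<^sub>0 nat) \<Rightarrow>\<^sub>0 complex"

definition pscale :: "complex \<Rightarrow> 'v cpoly \<Rightarrow> 'v cpoly" where
  "pscale c p = Poly_Mapping.map (\<lambda>a. c * a) p"

definition twisted_derivation :: "('v cpoly \<Rightarrow> 'v cpoly) \<Rightarrow> ('v cpoly \<Rightarrow> 'v cpoly) \<Rightarrow> bool" where
  "twisted_derivation \<sigma> D \<longleftrightarrow>
     (\<forall>a b. D (a + b) = D a + D b) \<and>
     (\<forall>c a. D (pscale c a) = pscale c (D a)) \<and>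
     (\<forall>a b. D (a * b) = D a * \<sigma> b + inv \<sigma> a * D b)"

(* gamma_{q,x_i}: x_i |-> q x_i, other variables fixed. *)
definition qgamma :: "complex \<Rightarrow> 'v \<Rightarrow> 'v cpoly \<Rightarrow> 'v cpoly" where
  "qgamma q i p = Poly_Mapping.mapp (\<lambda>m c. q ^ Poly_Mapping.lookup m i * c) p"

definition qint :: "complex \<Rightarrow> nat \<Rightarrow> complex" where
  "qint q v = (q ^ v - inverse q ^ v) / (q - inverse q)"

definition qderiv :: "complex \<Rightarrow> 'v \<Rightarrow> 'v cpoly \<Rightarrow> 'v cpoly" where
  "qderiv q i p = (\<Sum>m\<in>Poly_Mapping.keys p. Poly_Mapping.single (m - Poly_Mapping.single i 1)
                                    (qint q (Poly_Mapping.lookup m i) * Poly_Mapping.lookup p m))"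

end

theory Submission
  imports Defs
begin

lemma pm_induct[case_names zero single add]:
  fixes p :: "'a \<Rightarrow>\<^sub>0 'b::comm_monoid_add"
  assumes "P 0" "\<And>k c. P (Poly_Mapping.single k c)" "\<And>a b. P a \<Longrightarrow> P b \<Longrightarrow> P (a + b)"
  shows "P p"
proof (induction p rule: Poly_Mapping.update_induct)
  case const then show ?case using assms(1) .
next
  case (update f a b)
  have "Poly_Mapping.update a b f = f + Poly_Mapping.single a b"
    using update(1) by (intro poly_mapping_eqI) (auto simp: lookup_update lookup_add lookup_single in_keys_iff)
  then show ?case using assms(2,3) update(3) by simp
qed

lemma mono_induct[case_names zero step]:
  fixes m :: "'a \<Rightarrow>\<^sub>0 nat"
  assumes "P 0" "\<And>m j. P m \<Longrightarrow> P (Poly_Mapping.single j 1 + m)"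
  shows "P m"
proof (induction m rule: Poly_Mapping.update_induct)
  case const then show ?case using assms(1) .
next
  case (update f a b)
  have e: "Poly_Mapping.update a b f = f + Poly_Mapping.single a b"
    using update(1) by (intro poly_mapping_eqI) (auto simp: lookup_update lookup_add lookup_single in_keys_iff)
  have "P (f + Poly_Mapping.single a n)" for n
  proof (induction n)
    case 0 then show ?case using update(3) by simp
  next
    case (Suc n)
    have "f + Poly_Mapping.single a (Suc n) = Poly_Mapping.single a 1 + (f + Poly_Mapping.single a n)"
      by (simp add: single_add[symmetric] algebra_simps)
    then show ?case using assms(2)[OF Suc] by simp
  qed
  then show ?case using e by simp
qed

lemma lookup_qgamma: "Poly_Mapping.lookup (qgamma q i p) k = q ^ Poly_Mapping.lookup k i * Poly_Mapping.lookup p k"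
  unfolding qgamma_def by (simp add: lookup_mapp in_keys_iff when_def)

lemma qgamma_single: "qgamma q i (Poly_Mapping.single m c) = Poly_Mapping.single m (q ^ Poly_Mapping.lookup m i * c)"
  by (intro poly_mapping_eqI) (simp add: lookup_qgamma lookup_single when_def)

lemma inv_qgamma: assumes "q \<noteq> 0" shows "inv (qgamma q i) = qgamma (inverse q) i"
proof (rule inv_equality)
  fix x show "qgamma (inverse q) i (qgamma q i x) = x"
    by (intro poly_mapping_eqI) (simp add: lookup_qgamma assms power_inverse field_simps)
next
  fix x show "qgamma q i (qgamma (inverse q) i x) = x"
    by (intro poly_mapping_eqI) (simp add: lookup_qgamma assms power_inverse field_simps)
qed

lemma qderiv_superset:
  assumes "finite S" "Poly_Mapping.keys p \<subseteq> S"
  shows "qderiv q i p = (\<Sum>m\<in>S. Poly_Mapping.single (m - Poly_Mapping.single i 1)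
                                    (qint q (Poly_Mapping.lookup m i) * Poly_Mapping.lookup p m))"
  unfolding qderiv_def
  by (rule sum.mono_neutral_left[OF assms]) (auto simp: in_keys_iff)

lemma qderiv_add: "qderiv q i (a + b) = qderiv q i a + qderiv q i b"
proof -
  let ?S = "Poly_Mapping.keys a \<union> Poly_Mapping.keys b"
  have f: "finite ?S" by simp
  have s: "Poly_Mapping.keys (a + b) \<subseteq> ?S" by (rule keys_add)
  have a: "Poly_Mapping.keys a \<subseteq> ?S" and b: "Poly_Mapping.keys b \<subseteq> ?S" by auto
  show ?thesis
    unfolding qderiv_superset[OF f s] qderiv_superset[OF f a] qderiv_superset[OF f b]
    by (simp add: lookup_add distrib_left single_add sum.distrib)
qed

lemma qderiv_single: "qderiv q i (Poly_Mapping.single m c) =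
   Poly_Mapping.single (m - Poly_Mapping.single i 1) (qint q (Poly_Mapping.lookup m i) * c)"
  unfolding qderiv_def by simp

lemma qderiv_zero: "qderiv q i 0 = 0"
  unfolding qderiv_def by simp

lemma lookup_single_mult:
  fixes g :: "('a \<Rightarrow>\<^sub>0 nat) \<Rightarrow>\<^sub>0 complex"
  shows "Poly_Mapping.lookup (Poly_Mapping.single k c * g) (k + n) = c * Poly_Mapping.lookup g n"
proof (induction g rule: pm_induct)
  case zero then show ?case by simp
next
  case (single l b) then show ?case by (simp add: mult_single lookup_single when_def)
next
  case (add a b) then show ?case by (simp add: distrib_left lookup_add)
qed

lemma single_mult_zero:
  fixes g :: "('a \<Rightarrow>\<^sub>0 nat) \<Rightarrow>\<^sub>0 complex"
  assumes "c \<noteq> 0" "Poly_Mapping.single k c * g = 0" shows "g = 0"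
proof (rule poly_mapping_eqI)
  fix n show "Poly_Mapping.lookup g n = Poly_Mapping.lookup 0 n"
    using lookup_single_mult[of k c g n] assms by simp
qed

lemma qint_zero: "qint q 0 = 0" by (simp add: qint_def)
lemma qint_one: assumes "q - inverse q \<noteq> 0" shows "qint q 1 = 1" using assms by (simp add: qint_def)
lemma qint_Suc: assumes "q \<noteq> 0" "q - inverse q \<noteq> 0"
  shows "qint q (Suc k) = q ^ k + inverse q * qint q k"
  using assms unfolding qint_def by (simp add: field_simps power_inverse)


theorem lemma1p2:
  fixes q :: complex and i :: "'v::finite" and D :: "'v cpoly \<Rightarrow> 'v cpoly"
  assumes "q \<noteq> 0" and "q \<noteq> 1" and "q \<noteq> -1"
    and "twisted_derivation (qgamma q i) D"
  shows "\<exists>f :: 'v cpoly. \<forall>a. D a = f * qderiv q i a"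
proof -
  note q0 = assms(1)
  have qq: "q - inverse q \<noteq> 0"
  proof
    assume "q - inverse q = 0"
    then have "q * q = 1" using q0 by (simp add: field_simps)
    then have "(q - 1) * (q + 1) = 0" by (simp add: algebra_simps)
    then show False using assms(2,3) by (auto simp: add_eq_0_iff2)
  qed
  have qq2: "inverse q - q \<noteq> 0" using qq by simp
  define e :: "'v \<Rightarrow> 'v \<Rightarrow>\<^sub>0 nat" where "e j = Poly_Mapping.single j 1" for j
  define X :: "'v \<Rightarrow> 'v cpoly" where "X j = Poly_Mapping.single (e j) 1" for j
  define f where "f = D (X i)"
  have Dadd: "\<And>a b. D (a + b) = D a + D b"
   and Dsc: "\<And>c a. D (pscale c a) = pscale c (D a)"
   and Dmul: "\<And>a b. D (a * b) = D a * qgamma q i b + qgamma (inverse q) i a * D b"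
    using assms(4) unfolding twisted_derivation_def inv_qgamma[OF q0] by auto
  have psc: "pscale c p = Poly_Mapping.single 0 c * p" for c and p :: "'v cpoly"
    unfolding pscale_def mult_map_scale_conv_mult[symmetric] by simp
  have D0: "D 0 = 0" using Dadd[of 0 0] by simp
  have D1: "D 1 = 0"
  proof -
    have "D (1 * 1) = D 1 * qgamma q i 1 + qgamma (inverse q) i 1 * D 1" by (rule Dmul)
    moreover have "qgamma r i 1 = 1" for r
      using qgamma_single[of r i 0 1] by simp
    ultimately show ?thesis by simp
  qed
  have Dsingle: "D (Poly_Mapping.single m c) = Poly_Mapping.single 0 c * D (Poly_Mapping.single m 1)" for m c
  proof -
    have "Poly_Mapping.single m c = pscale c (Poly_Mapping.single m 1)"
      by (simp add: psc mult_single)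
    then show ?thesis using Dsc psc by simp
  qed
  have gX: "qgamma r i (X j) = (if j = i then Poly_Mapping.single (e i) r else X j)" for r j
    by (simp add: X_def qgamma_single e_def lookup_single)
  have DXj: "D (X j) = 0" if "j \<noteq> i" for j
  proof -
    have "D (X i * X j) = f * X j + Poly_Mapping.single (e i) (inverse q) * D (X j)"
      using Dmul[of "X i" "X j"] that by (simp add: gX f_def)
    moreover have "D (X j * X i) = D (X j) * Poly_Mapping.single (e i) q + X j * f"
      using Dmul[of "X j" "X i"] that by (simp add: gX f_def)
    ultimately have "Poly_Mapping.single (e i) (inverse q) * D (X j) = Poly_Mapping.single (e i) q * D (X j)"
      by (simp add: mult.commute)
    then have "Poly_Mapping.single (e i) (inverse q - q) * D (X j) = 0"
      by (simp add: single_diff left_diff_distrib)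
    then show ?thesis using single_mult_zero qq2 by blast
  qed
  have mono: "D (Poly_Mapping.single m 1) = f * Poly_Mapping.single (m - e i) (qint q (Poly_Mapping.lookup m i))" for m
  proof (induction m rule: mono_induct)
    case zero then show ?case using D1 by (simp add: qint_zero)
  next
    case (step m j)
    have split: "Poly_Mapping.single (Poly_Mapping.single j 1 + m) (1::complex) = X j * Poly_Mapping.single m 1"
      by (simp add: X_def e_def mult_single)
    show ?case
    proof (cases "j = i")
      case False
      have l: "Poly_Mapping.lookup (Poly_Mapping.single j 1 + m) i = Poly_Mapping.lookup m i"
        using False by (simp add: lookup_add lookup_single)
      have m: "Poly_Mapping.single j 1 + m - e i = e j + (m - e i)"
        using False by (intro poly_mapping_eqI) (auto simp add: e_def lookup_add lookup_minus lookup_single when_def)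
      have "D (X j * Poly_Mapping.single m 1) = X j * (f * Poly_Mapping.single (m - e i) (qint q (Poly_Mapping.lookup m i)))"
        unfolding Dmul DXj[OF False] using False by (simp add: gX step)
      also have "\<dots> = f * Poly_Mapping.single (e j + (m - e i)) (qint q (Poly_Mapping.lookup m i))"
        by (simp add: X_def mult_single algebra_simps)
      finally show ?thesis unfolding split l m .
    next
      case True
      define k where "k = Poly_Mapping.lookup m i"
      have m: "Poly_Mapping.single j 1 + m - e i = m"
        using True by (simp add: e_def)
      have l: "Poly_Mapping.lookup (Poly_Mapping.single j 1 + m) i = Suc k"
        using True by (simp add: lookup_add k_def)
      have "D (X j * Poly_Mapping.single m 1) =
            f * Poly_Mapping.single m (q ^ k) + Poly_Mapping.single (e i) (inverse q) * (f * Poly_Mapping.single (m - e i) (qint q k))"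
        unfolding Dmul using True by (simp add: gX step qgamma_single f_def k_def)
      also have "\<dots> = f * Poly_Mapping.single m (qint q (Suc k))"
      proof (cases "k = 0")
        case True then show ?thesis by (simp add: qint_zero qint_one[OF qq, simplified])
      next
        case False
        have em: "e i + (m - e i) = m"
          using False by (intro poly_mapping_eqI) (auto simp add: e_def k_def lookup_add lookup_minus lookup_single when_def)
        have "Poly_Mapping.single (e i) (inverse q) * (f * Poly_Mapping.single (m - e i) (qint q k))
              = f * Poly_Mapping.single (e i + (m - e i)) (inverse q * qint q k)"
          by (simp only: mult.left_commute[of _ f] mult_single)
        also have "\<dots> = f * Poly_Mapping.single m (inverse q * qint q k)" by (simp only: em)
        finally show ?thesis
          by (simp only: qint_Suc[OF q0 qq] single_add distrib_left)
      qed
      finally show ?thesis by (simp only: split m l)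
    qed
  qed
  have "D a = f * qderiv q i a" for a
  proof (induction a rule: pm_induct)
    case zero then show ?case by (simp add: D0 qderiv_zero)
  next
    case (single m c)
    have "D (Poly_Mapping.single m c) = Poly_Mapping.single 0 c * (f * Poly_Mapping.single (m - e i) (qint q (Poly_Mapping.lookup m i)))"
      by (simp only: Dsingle[of m c] mono)
    also have "\<dots> = f * Poly_Mapping.single (m - e i) (qint q (Poly_Mapping.lookup m i) * c)"
      by (simp only: mult.left_commute[of _ f] mult_single add_0 mult.commute[of c])
    finally show ?case by (simp only: qderiv_single e_def)
  next
    case (add a b) then show ?case by (simp add: Dadd qderiv_add distrib_left)
  qed
  then show ?thesis by blast
qed

end
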